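(* In Zhu's algebra $A(M(1)^+)$ (writing $\omega$, $J$ for $[\omega]$, $[J]$ and products for $*$), $$J^2=p(\omega)+q(\omega)J,$$ where $p(x)=\frac{1816}{35}x^4-\frac{212}{5}x^3+\frac{89}{10}x^2-\frac{27}{70}x$ and $q(x)=-\frac{314}{35}x^2+\frac{89}{14}x-\frac{27}{70}$. Equivalently, $$(J+\omega-4\omega^2)(70J+908\omega^2-515\omega+27)=0.$$
   Context: Let $\mathfrak h=\mathbb C h$ with $\langle h,h\rangle=1$, Heisenberg algebra $[h(m),h(n)]=m\delta_{m+n,0}$. Let $M(1)=\mathbb C[h(-1),h(-2),\dots]\mathbf 1$ be the Heisenberg vertex operator algebra of central charge 1 (vacuum $\mathbf 1$, $Y(h(-1)\mathbf 1,z)=\sum_nh(n)z^{-n-1}$, vertex operators of monomials given by normally ordered products of derivatives of $h(z)$), with conformal vector $\omega=\frac12h(-1)^2\mathbf 1$. Let $\theta$ be the automorphism acting by $(-1)^k$ on monomials $h(-n_1)\cdots h(-n_k)\mathbf 1$ and $M(1)^+$ its fixed-point vertex operator subalgebra. Let $J=h(-1)^4\mathbf 1-2h(-3)h(-1)\mathbf 1+\frac32h(-2)^2\mathbf 1$. Zhu's algebra: for a vertex operator algebra $V$, homogeneous $u$ and $v\in V$ with $Y(u,z)=\sum u_nz^{-n-1}$, set $u*v=\sum_{i\ge0}\binom{\mathrm{wt}(u)}{i}u_{i-1}v$ and $u\circ v=\sum_{i\ge0}\binom{\mathrm{wt}(u)}{i}u_{i-2}v$; $O(V)$ is the span of all $u\circ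 v$, and $A(V)=V/O(V)$ is an associative algebra (with unit $[\mathbf 1]$) under the product induced by $*$; $[v]=v+O(V)$. *)

theory Defs
  imports Complex_Main "HOL-Library.Multiset" "HOL-Library.Function_Algebras"
begin

text \<open>A monomial h(-n_1)...h(-n_k)1 (all n_i \<ge> 1) is encoded by the multiset
  {#n_1,...,n_k#}. A vector of M(1) is a finitely supported complex-valued
  function on such multisets (its coordinates in the monomial basis).\<close>

type_synonym vec = "nat multiset \<Rightarrow> complex"

definition supp :: "vec \<Rightarrow> nat multiset set" where
  "supp v = {m. v m \<noteq> 0}"

definition smul :: "complex \<Rightarrow> vec \<Rightarrow> vec" where
  "smul c v = (\<lambda>x. c * v x)"

definition mono :: "nat multiset \<Rightarrow> vec" where
  "mono m = (\<lambda>x. if x = m then 1 else 0)"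

definition M1 :: "vec set" where
  "M1 = {v. finite (supp v) \<and> (\<forall>m\<in>supp v. 0 \<notin># m)}"

definition theta :: "vec \<Rightarrow> vec" where
  "theta v = (\<lambda>m. (-1) ^ size m * v m)"

definition M1plus :: "vec set" where
  "M1plus = {v \<in> M1. theta v = v}"

definition lin_ext :: "(nat multiset \<Rightarrow> vec) \<Rightarrow> vec \<Rightarrow> vec" where
  "lin_ext F v = (\<Sum>m\<in>supp v. smul (v m) (F m))"

text \<open>Heisenberg modes h(j): h(-n) (n>0) multiplies by h(-n); h(0) acts as 0;
  h(n) (n>0) acts as n d/dh(-n), so that [h(m),h(n)] = m delta_{m+n,0}.\<close>
definition hmode_basis :: "int \<Rightarrow> nat multiset \<Rightarrow> vec" where
  "hmode_basis j m =
     (if j < 0 then mono (m + {#nat (- j)#})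
      else if j = 0 then 0
      else smul (of_int j * of_nat (count m (nat j))) (mono (m - {#nat j#})))"

definition hmode :: "int \<Rightarrow> vec \<Rightarrow> vec" where
  "hmode j = lin_ext (hmode_basis j)"

definition apply_modes :: "int list \<Rightarrow> vec \<Rightarrow> vec" where
  "apply_modes js v = foldr hmode js v"

text \<open>Normally ordered product :h(j_1)...h(j_k): (creation modes to the left).\<close>
definition normal_apply :: "int list \<Rightarrow> vec \<Rightarrow> vec" where
  "normal_apply js v = apply_modes (filter (\<lambda>j. j < 0) js @ filter (\<lambda>j. 0 \<le> j) js) v"

text \<open>The divided derivative (1/(n-1)!) d^{n-1}/dz^{n-1} h(z)
  = sum_j binom(-j-1, n-1) h(j) z^{-j-n}.\<close>
definition mode_coeff :: "nat list \<Rightarrow> int list \<Rightarrow> complex" where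
  "mode_coeff ns js = prod_list (map2 (\<lambda>n j. (of_int (- j - 1) :: complex) gchoose (n - 1)) ns js)"

definition vo_term :: "nat list \<Rightarrow> int list \<Rightarrow> vec \<Rightarrow> vec" where
  "vo_term ns js v = smul (mode_coeff ns js) (normal_apply js v)"

text \<open>The mode u_n of Y(u,z) = sum_n u_n z^{-n-1} for the monomial
  u = h(-n_1)...h(-n_k)1, namely the coefficient of z^{-n-1} in
  :d^{(n_1-1)}h(z) ... d^{(n_k-1)}h(z): applied to v.  This is a finite sum
  (all but finitely many terms vanish); we sum exactly the nonzero terms.\<close>
definition vo_mono_mode :: "nat multiset \<Rightarrow> int \<Rightarrow> vec \<Rightarrow> vec" where
  "vo_mono_mode m n v =
     (let ns = sorted_list_of_multiset m in
      \<Sum>js \<in> {js. length js = length ns \<and>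
                 sum_list (map2 (\<lambda>a j. j + int a) ns js) = n + 1 \<and>
                 vo_term ns js v \<noteq> 0}. vo_term ns js v)"

definition vmode :: "vec \<Rightarrow> int \<Rightarrow> vec \<Rightarrow> vec" where
  "vmode u n v = (\<Sum>m\<in>supp u. smul (u m) (vo_mono_mode m n v))"

text \<open>Weight (L(0)-eigenvalue) of a monomial is n_1+...+n_k.\<close>
definition homogeneous :: "vec \<Rightarrow> bool" where
  "homogeneous u \<longleftrightarrow> (\<exists>w. \<forall>m\<in>supp u. sum_mset m = w)"

definition zstar :: "vec \<Rightarrow> vec \<Rightarrow> vec" where
  "zstar u v = (\<Sum>m\<in>supp u. smul (u m)
      (\<Sum>i\<le>sum_mset m. smul (of_nat (sum_mset m choose i)) (vo_mono_mode m (int i - 1) v)))"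

definition zcirc :: "vec \<Rightarrow> vec \<Rightarrow> vec" where
  "zcirc u v = (\<Sum>m\<in>supp u. smul (u m)
      (\<Sum>i\<le>sum_mset m. smul (of_nat (sum_mset m choose i)) (vo_mono_mode m (int i - 2) v)))"

inductive_set OV :: "vec set" where
  zero: "0 \<in> OV"
| step: "\<lbrakk>x \<in> OV; u \<in> M1plus; homogeneous u; v \<in> M1plus\<rbrakk>
           \<Longrightarrow> x + smul c (zcirc u v) \<in> OV"

definition vac :: vec where "vac = mono {#}"

definition omega :: vec where "omega = smul (1/2) (mono {#1, 1#})"

definition Jvec :: vec where
  "Jvec = mono {#1, 1, 1, 1#} - smul 2 (mono {#3, 1#}) + smul (3/2) (mono {#2, 2#})"

end

theory Submission
  imports Defs
begin


lemma smul_apply: "smul c v x = c * v x" by (simp add: smul_def)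
lemma smul_0[simp]: "smul 0 v = 0" by (simp add: smul_def fun_eq_iff)
lemma smul_zero[simp]: "smul c 0 = 0" by (simp add: smul_def fun_eq_iff)
lemma smul_1[simp]: "smul 1 v = v" by (simp add: smul_def)
lemma smul_add: "smul c (u + v) = smul c u + smul c v" by (simp add: smul_def fun_eq_iff algebra_simps)
lemma smul_diff: "smul c (u - v) = smul c u - smul c v" by (simp add: smul_def fun_eq_iff algebra_simps)
lemma smul_add_left: "smul (a + b) v = smul a v + smul b v" by (simp add: smul_def fun_eq_iff algebra_simps)
lemma smul_smul: "smul a (smul b v) = smul (a * b) v" by (simp add: smul_def fun_eq_iff)

lemma sum_fun_apply: "(\<Sum>i\<in>A. f i) x = (\<Sum>i\<in>A. (f i) x)" for f :: "'b \<Rightarrow> 'a \<Rightarrow> 'c::comm_monoid_add"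
  by (induction A rule: infinite_finite_induct) auto

lemma sum_list_fun_apply: "(sum_list fs) x = sum_list (map (\<lambda>f. f x) fs)" for fs :: "('a \<Rightarrow> 'c::monoid_add) list"
  by (induction fs) auto

lemma smul_sum: "smul c (\<Sum>i\<in>A. f i) = (\<Sum>i\<in>A. smul c (f i))"
  by (simp add: smul_def fun_eq_iff sum_fun_apply sum_distrib_left)

lemma smul_sum_list: "smul c (sum_list vs) = sum_list (map (smul c) vs)"
  by (simp add: fun_eq_iff smul_def sum_list_fun_apply sum_list_const_mult[symmetric] o_def)

lemma supp_zero[simp]: "supp 0 = {}" by (simp add: supp_def)
lemma supp_smul: "c \<noteq> 0 \<Longrightarrow> supp (smul c v) = supp v" by (simp add: supp_def smul_def)
lemma supp_mono[simp]: "supp (mono m) = {m}" by (simp add: supp_def mono_def)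
lemma smul_eq_0_iff: "smul c v = 0 \<longleftrightarrow> c = 0 \<or> v = 0"
  by (auto simp: smul_def fun_eq_iff)

section \<open>Finite representations\<close>

type_synonym rep = "(nat list \<times> int) list"

definition vec_of :: "rep \<Rightarrow> vec" where
  "vec_of xs = sum_list (map (\<lambda>(ns, c). smul (of_int c) (mono (mset ns))) xs)"

lemma vec_of_Nil[simp]: "vec_of [] = 0" by (simp add: vec_of_def)
lemma vec_of_Cons: "vec_of ((ns, c) # xs) = smul (of_int c) (mono (mset ns)) + vec_of xs"
  by (simp add: vec_of_def)
lemma vec_of_append: "vec_of (xs @ ys) = vec_of xs + vec_of ys" by (simp add: vec_of_def)
lemma vec_of_concat: "vec_of (concat xss) = sum_list (map vec_of xss)"
  by (induction xss) (auto simp: vec_of_append)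

definition mapc :: "int \<Rightarrow> rep \<Rightarrow> rep" where
  "mapc c xs = map (\<lambda>(n, d). (n, c * d)) xs"

lemma vec_of_mapc: "vec_of (mapc c xs) = smul (of_int c) (vec_of xs)"
  by (induction xs) (auto simp: mapc_def vec_of_Cons smul_def fun_eq_iff algebra_simps)

lemma vec_of_single: "vec_of [(ns, 1)] = mono (mset ns)" by (simp add: vec_of_Cons)

lemma vec_of_apply: "vec_of xs m = sum_list (map (\<lambda>(ns, c). if mset ns = m then of_int c else 0) xs)"
  by (induction xs) (auto simp: vec_of_Cons smul_def mono_def)

lemma supp_vec_of: "supp (vec_of xs) \<subseteq> (\<lambda>e. mset (fst e)) ` set xs"
proof
  fix m assume "m \<in> supp (vec_of xs)"
  then have "vec_of xs m \<noteq> 0" by (simp add: supp_def)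
  then show "m \<in> (\<lambda>e. mset (fst e)) ` set xs"
  proof (induction xs)
    case Nil then show ?case by simp
  next
    case (Cons e xs) then show ?case
      by (cases e) (auto simp: vec_of_Cons smul_def mono_def split: if_splits)
  qed
qed

fun addto :: "nat list \<times> int \<Rightarrow> rep \<Rightarrow> rep" where
  "addto e [] = [e]"
| "addto (k, c) ((k', c') # r) = (if k = k' then (k, c + c') # r else (k', c') # addto (k, c) r)"

definition normalize :: "rep \<Rightarrow> rep" where
  "normalize xs = filter (\<lambda>(k, c). c \<noteq> 0) (foldr addto xs [])"

lemma vec_of_addto: "vec_of (addto e acc) = vec_of (e # acc)"
proof (induction e acc rule: addto.induct)
  case (1 e) then show ?case by simp
next
  case (2 k c k' c' r)
  then show ?case by (auto simp: vec_of_Cons smul_add_left add_ac)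
qed

lemma vec_of_filter_nz: "vec_of (filter (\<lambda>(k, c). c \<noteq> 0) xs) = vec_of xs"
  by (induction xs) (auto simp: vec_of_Cons)

lemma vec_of_normalize: "vec_of (normalize xs) = vec_of xs"
proof -
  have "vec_of (foldr addto xs []) = vec_of xs"
    by (induction xs) (auto simp: vec_of_addto vec_of_Cons)
  then show ?thesis by (simp add: normalize_def vec_of_filter_nz)
qed

lemma vec_of_eq_from_normalize:
  assumes "normalize (xs @ mapc (-1) ys) = []"
  shows "vec_of xs = vec_of ys"
proof -
  have "vec_of (xs @ mapc (-1) ys) = 0" using vec_of_normalize[of "xs @ mapc (-1) ys"] assms by simp
  then have "vec_of xs + smul (-1) (vec_of ys) = 0" by (simp add: vec_of_append vec_of_mapc)
  then show ?thesis by (simp add: fun_eq_iff smul_def add_eq_0_iff)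
qed

lemma lsum_superset:
  assumes "finite S" "supp v \<subseteq> S"
  shows "(\<Sum>m\<in>supp v. smul (v m) (G m)) = (\<Sum>m\<in>S. smul (v m) (G m))"
  by (rule sum.mono_neutral_left) (use assms in \<open>auto simp: supp_def\<close>)

lemma lsum_vec_of_aux:
  assumes "finite S" "(\<lambda>e. mset (fst e)) ` set xs \<subseteq> S"
  shows "(\<Sum>m\<in>S. smul (vec_of xs m) (G m)) = sum_list (map (\<lambda>(ns, c). smul (of_int c) (G (mset ns))) xs)"
  using assms(2)
proof (induction xs)
  case Nil then show ?case by simp
next
  case (Cons e xs)
  obtain ns c where e: "e = (ns, c)" by (cases e)
  have k: "mset ns \<in> S" using Cons.prems e by auto
  have "(\<Sum>m\<in>S. smul (vec_of (e # xs) m) (G m))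
      = (\<Sum>m\<in>S. smul (of_int c * mono (mset ns) m) (G m)) + (\<Sum>m\<in>S. smul (vec_of xs m) (G m))"
    by (simp add: e vec_of_Cons smul_apply smul_add_left sum.distrib)
  also have "(\<Sum>m\<in>S. smul (of_int c * mono (mset ns) m) (G m)) = (\<Sum>m\<in>S. if m = mset ns then smul (of_int c) (G (mset ns)) else 0)"
    by (rule sum.cong) (auto simp: mono_def)
  also have "\<dots> = smul (of_int c) (G (mset ns))"
    using k assms(1) by (simp add: sum.delta)
  finally show ?case using Cons by (simp add: e)
qed

lemma lsum_vec_of:
  "(\<Sum>m\<in>supp (vec_of xs). smul (vec_of xs m) (G m)) = sum_list (map (\<lambda>(ns, c). smul (of_int c) (G (mset ns))) xs)"
  using lsum_superset[OF _ supp_vec_of, of xs G] lsum_vec_of_aux[of "(\<lambda>e. mset (fst e)) ` set xs" xs G]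
  by simp

lemma lsum_smul:
  "(\<Sum>m\<in>supp (smul s v). smul ((smul s v) m) (G m)) = smul s (\<Sum>m\<in>supp v. smul (v m) (G m))"
proof (cases "s = 0")
  case True then show ?thesis by (simp add: supp_def smul_def fun_eq_iff)
next
  case False then show ?thesis
    by (simp add: supp_smul smul_sum smul_smul smul_apply)
qed

lemma lsum_mono_smul:
  "(\<Sum>m\<in>supp (smul c (mono y)). smul ((smul c (mono y)) m) (G m)) = smul c (G y)"
proof -
  have "mono y y = 1" by (simp add: mono_def)
  then show ?thesis by (subst lsum_smul) simp
qed



definition hb :: "int \<Rightarrow> nat list \<times> int \<Rightarrow> rep" where
  "hb j e = (case e of (ns, c) \<Rightarrow> if j < 0 then [(insort (nat (-j)) ns, c)] else if j = 0 then []
     else (let k = count_list ns (nat j) in if k = 0 then [] else [(remove1 (nat j) ns, c * (j * int k))]))"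

definition hexec :: "int \<Rightarrow> rep \<Rightarrow> rep" where "hexec j xs = concat (map (hb j) xs)"

definition napply :: "int list \<Rightarrow> rep \<Rightarrow> rep" where
  "napply js xs = foldr hexec (filter (\<lambda>j. j < 0) js @ filter (\<lambda>j. 0 \<le> j) js) xs"

lemma lin_ext_vec_of: "lin_ext F (vec_of xs) = sum_list (map (\<lambda>(ns, c). smul (of_int c) (F (mset ns))) xs)"
  unfolding lin_ext_def by (rule lsum_vec_of)

lemma lin_ext_smul: "lin_ext F (smul s v) = smul s (lin_ext F v)"
  unfolding lin_ext_def by (rule lsum_smul)

lemma lin_ext_zero[simp]: "lin_ext F 0 = 0" by (simp add: lin_ext_def)

lemma lin_ext_smul_mono: "lin_ext F (smul c (mono y)) = smul c (F y)"
  unfolding lin_ext_def by (rule lsum_mono_smul)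

lemma hmode_zero[simp]: "hmode j 0 = 0" by (simp add: hmode_def)
lemma hmode_smul: "hmode j (smul s v) = smul s (hmode j v)" by (simp add: hmode_def lin_ext_smul)
lemma hmode_smul_mono: "hmode j (smul c (mono y)) = smul c (hmode_basis j y)"
  by (simp add: hmode_def lin_ext_smul_mono)

lemma vec_of_hb: "vec_of (hb j (ns, c)) = smul (of_int c) (hmode_basis j (mset ns))"
proof -
  consider "j < 0" | "j = 0" | "j > 0" by linarith
  then show ?thesis
  proof cases
    case 1 then show ?thesis by (simp add: hb_def hmode_basis_def vec_of_Cons)
  next
    case 2 then show ?thesis by (simp add: hb_def hmode_basis_def smul_def fun_eq_iff)
  next
    case 3
    have cnt: "count (mset ns) (nat j) = count_list ns (nat j)" by (simp add: count_mset)
    show ?thesis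
    proof (cases "count_list ns (nat j) = 0")
      case True then show ?thesis using 3 cnt
        by (simp add: hb_def hmode_basis_def smul_def fun_eq_iff)
    next
      case False then show ?thesis using 3 cnt
        by (simp add: hb_def hmode_basis_def vec_of_Cons smul_smul Let_def)
    qed
  qed
qed

lemma hmode_vec_of: "hmode j (vec_of xs) = vec_of (hexec j xs)"
proof -
  have "hmode j (vec_of xs) = sum_list (map (\<lambda>(ns, c). smul (of_int c) (hmode_basis j (mset ns))) xs)"
    by (simp add: hmode_def lin_ext_vec_of)
  also have "\<dots> = sum_list (map (\<lambda>e. vec_of (hb j e)) xs)"
    by (rule arg_cong[where f = sum_list], rule map_cong) (auto simp: vec_of_hb)
  also have "\<dots> = vec_of (hexec j xs)"
    by (simp add: hexec_def vec_of_concat o_def)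
  finally show ?thesis .
qed

lemma apply_modes_vec_of: "apply_modes js (vec_of xs) = vec_of (foldr hexec js xs)"
  by (induction js) (auto simp: apply_modes_def hmode_vec_of)

lemma normal_apply_vec_of: "normal_apply js (vec_of xs) = vec_of (napply js xs)"
  by (simp add: normal_apply_def napply_def apply_modes_vec_of)

lemma foldr_hmode_smul: "foldr hmode js (smul s v) = smul s (foldr hmode js v)"
  by (induction js) (auto simp: hmode_smul)

lemma foldr_hmode_zero: "foldr hmode js 0 = 0"
proof (induction js)
  case Nil show ?case by simp
next
  case (Cons a js)
  have "foldr hmode (a # js) 0 = hmode a (foldr hmode js 0)" by simp
  also have "\<dots> = 0" by (simp only: Cons.IH hmode_zero)
  finally show ?case .
qed

lemma normal_apply_smul: "normal_apply js (smul s v) = smul s (normal_apply js v)"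
  by (simp add: normal_apply_def apply_modes_def foldr_hmode_smul)

lemma hexec_Nil[simp]: "hexec j [] = []" by (simp add: hexec_def)
lemma foldr_hexec_Nil[simp]: "foldr hexec js [] = []" by (induction js) auto

lemma hexec_append: "hexec j (xs @ ys) = hexec j xs @ hexec j ys" by (simp add: hexec_def)

lemma foldr_hexec_append: "foldr hexec js (xs @ ys) = foldr hexec js xs @ foldr hexec js ys"
  by (induction js) (auto simp: hexec_append)

lemma hexec_mapc: "hexec j (mapc c xs) = mapc c (hexec j xs)"
  by (induction xs) (auto simp: hexec_def mapc_def hb_def Let_def algebra_simps)

lemma foldr_hexec_mapc: "foldr hexec js (mapc c xs) = mapc c (foldr hexec js xs)"
  by (induction js) (auto simp: hexec_mapc)

lemma napply_append: "napply js (xs @ ys) = napply js xs @ napply js ys"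
  by (simp add: napply_def foldr_hexec_append)

lemma napply_mapc: "napply js (mapc c xs) = mapc c (napply js xs)"
  by (simp add: napply_def foldr_hexec_mapc)

lemma napply_single: "napply js [(x, c)] = mapc c (napply js [(x, 1)])"
  using napply_mapc[of js c "[(x, 1)]"] by (simp add: mapc_def)

lemma vec_of_napply_sum:
  "vec_of (napply js V) = sum_list (map (\<lambda>(x, c). smul (of_int c) (vec_of (napply js [(x, 1)]))) V)"
proof (induction V)
  case Nil then show ?case by (simp add: napply_def)
next
  case (Cons e V)
  obtain x c where e: "e = (x, c)" by (cases e)
  have "vec_of (napply js (e # V)) = vec_of (napply js ([(x, c)] @ V))" by (simp add: e)
  also have "\<dots> = vec_of (napply js [(x, c)]) + vec_of (napply js V)"
    by (simp only: napply_append vec_of_append)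
  also have "vec_of (napply js [(x, c)]) = smul (of_int c) (vec_of (napply js [(x, 1)]))"
    by (simp only: napply_single[of js x c] vec_of_mapc)
  finally show ?case using Cons.IH by (simp add: e)
qed



fun ff :: "nat \<Rightarrow> int \<Rightarrow> int" where
  "ff 0 x = 1"
| "ff (Suc k) x = (x - int k) * ff k x"

definition mcoef :: "nat list \<Rightarrow> int list \<Rightarrow> int" where
  "mcoef ns js = prod_list (map2 (\<lambda>n j. ff (n - 1) (- j - 1)) ns js)"

definition fct :: "nat list \<Rightarrow> int" where
  "fct ns = prod_list (map (\<lambda>a. int (fact (a - 1))) ns)"

lemma prod_ff: "(\<Prod>i=0..<k. (of_int x :: complex) - of_nat i) = of_int (ff k x)"
  by (induction k) (auto simp: prod.atLeast0_lessThan_Suc algebra_simps)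

lemma gchoose_ff: "(of_int x :: complex) gchoose k = of_int (ff k x) / fact k"
  by (simp add: gbinomial_prod_rev prod_ff)

lemma fct_nonzero: "fct ns \<noteq> 0"
  by (induction ns) (auto simp: fct_def)

lemma mode_coeff_eq:
  "length ns = length js \<Longrightarrow> mode_coeff ns js = of_int (mcoef ns js) / of_int (fct ns)"
proof (induction ns js rule: list_induct2)
  case Nil then show ?case by (simp add: mode_coeff_def mcoef_def fct_def)
next
  case (Cons a ns j js)
  have "mode_coeff (a # ns) (j # js) = ((of_int (- j - 1) :: complex) gchoose (a - 1)) * mode_coeff ns js"
    by (simp add: mode_coeff_def)
  also have "\<dots> = of_int (ff (a - 1) (- j - 1)) / fact (a - 1) * (of_int (mcoef ns js) / of_int (fct ns))"
    by (simp only: gchoose_ff Cons.IH)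
  also have "\<dots> = of_int (mcoef (a # ns) (j # js)) / of_int (fct (a # ns))"
    by (simp add: mcoef_def fct_def)
  finally show ?case .
qed

lemma ff_zero: "0 \<le> x \<Longrightarrow> x < int k \<Longrightarrow> ff k x = 0"
proof (induction k)
  case 0 then show ?case by simp
next
  case (Suc k) then show ?case by (cases "x = int k") auto
qed

lemma mcoef_nz:
  "length ns = length js \<Longrightarrow> mcoef ns js \<noteq> 0 \<Longrightarrow> list_all2 (\<lambda>a j. j < 0 \<longrightarrow> j \<le> - int a) ns js"
proof (induction ns js rule: list_induct2)
  case Nil then show ?case by simp
next
  case (Cons a ns j js)
  have h1: "ff (a - 1) (- j - 1) \<noteq> 0" and h2: "mcoef ns js \<noteq> 0"
    using Cons.prems by (auto simp: mcoef_def)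
  have "j < 0 \<longrightarrow> j \<le> - int a"
  proof
    assume "j < 0"
    with h1 ff_zero[of "- j - 1" "a - 1"] have "\<not> (- j - 1 < int (a - 1))" by auto
    then show "j \<le> - int a" by (cases a) auto
  qed
  with Cons.IH h2 show ?case by simp
qed

fun gen2 :: "nat list \<Rightarrow> int \<Rightarrow> nat list \<Rightarrow> int \<Rightarrow> int list list" where
  "gen2 [] N X S = (if N = 0 then [[]] else [])"
| "gen2 (a # ns) N X S =
     concat (map (\<lambda>p. map ((#) (int p)) (gen2 ns (N - int p) (remove1 p X) (S - int p))) (remdups X))
   @ concat (map (\<lambda>j. map ((#) j) (gen2 ns (N - j) X S)) [N - S .. min (-1) (- int a)])"

lemma gen2_sound: "js \<in> set (gen2 ns N X S) \<Longrightarrow> length js = length ns \<and> sum_list js = N"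
proof (induction ns arbitrary: N X S js)
  case Nil then show ?case by (simp split: if_splits)
next
  case (Cons a ns)
  from Cons.prems show ?case
    by (auto dest!: Cons.IH)
qed

lemma sum_list_le_pos: "sum_list js \<le> int (sum_list (map nat (filter (\<lambda>j. 0 < j) js)))"
  by (induction js) auto

lemma sum_mset_le_of_subset: "A \<subseteq># B \<Longrightarrow> sum_mset A \<le> sum_mset (B :: nat multiset)"
  by (metis le_add1 subset_mset.add_diff_inverse sum_mset.union)

lemma set_concat_map_sub: "p \<in> set L \<Longrightarrow> set (f p) \<subseteq> set (concat (map f L))"
  by auto

lemma gen2_complete:
  assumes "length js = length ns" "list_all2 (\<lambda>a j. j < 0 \<longrightarrow> j \<le> - int a) ns js" "0 \<notin> set js"
    "mset (map nat (filter (\<lambda>j. 0 < j) js)) \<subseteq># mset X" "sum_list js = N" "S = int (sum_list X)"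
  shows "js \<in> set (gen2 ns N X S)"
  using assms
proof (induction ns arbitrary: js N X S)
  case Nil then show ?case by simp
next
  case (Cons a ns)
  obtain j js' where js: "js = j # js'" using Cons.prems(1) by (cases js) auto
  have len: "length js' = length ns" using Cons.prems(1) js by simp
  have la: "list_all2 (\<lambda>a j. j < 0 \<longrightarrow> j \<le> - int a) ns js'" and ja: "j < 0 \<longrightarrow> j \<le> - int a"
    using Cons.prems(2) js by auto
  have j0: "j \<noteq> 0" and z': "0 \<notin> set js'" using Cons.prems(3) js by auto
  show ?case
  proof (cases "0 < j")
    case True
    have sub: "add_mset (nat j) (mset (map nat (filter (\<lambda>j. 0 < j) js'))) \<subseteq># mset X"
      using Cons.prems(4) js True by simp
    then have jX: "nat j \<in> set X" and sub': "mset (map nat (filter (\<lambda>j. 0 < j) js')) \<subseteq># mset (remove1 (nat j) X)"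
      by (auto simp: insert_subset_eq_iff)
    have sX: "int (sum_list (remove1 (nat j) X)) = int (sum_list X) - j"
    proof -
      have "sum_list (remove1 (nat j) X) + nat j = sum_list X"
        using jX by (induction X) auto
      then show ?thesis using True by linarith
    qed
    have IH: "js' \<in> set (gen2 ns (N - j) (remove1 (nat j) X) (S - j))"
      by (rule Cons.IH[OF len la z' sub']) (use Cons.prems(5,6) js sX in auto)
    have "js \<in> set (map ((#) (int (nat j))) (gen2 ns (N - int (nat j)) (remove1 (nat j) X) (S - int (nat j))))"
      using IH True js by simp
    moreover have "set (map ((#) (int (nat j))) (gen2 ns (N - int (nat j)) (remove1 (nat j) X) (S - int (nat j))))
      \<subseteq> set (concat (map (\<lambda>p. map ((#) (int p)) (gen2 ns (N - int p) (remove1 p X) (S - int p))) (remdups X)))"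
      by (rule set_concat_map_sub) (use jX in simp)
    ultimately have "js \<in> set (concat (map (\<lambda>p. map ((#) (int p)) (gen2 ns (N - int p) (remove1 p X) (S - int p))) (remdups X)))"
      by blast
    then show ?thesis by (simp only: gen2.simps set_append Un_iff simp_thms)
  next
    case False
    then have jn: "j < 0" using j0 by simp
    have sub': "mset (map nat (filter (\<lambda>j. 0 < j) js')) \<subseteq># mset X"
      using Cons.prems(4) js jn by simp
    have "sum_list js' \<le> int (sum_list (map nat (filter (\<lambda>j. 0 < j) js')))" by (rule sum_list_le_pos)
    also have "\<dots> \<le> int (sum_list X)"
      using sum_mset_le_of_subset[OF sub'] by (metis of_nat_le_iff sum_mset_sum_list)
    finally have lo: "N - S \<le> j" using Cons.prems(5,6) js by simp
    have hi: "j \<le> min (-1) (- int a)" using ja jn by simp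
    have IH: "js' \<in> set (gen2 ns (N - j) X S)"
      by (rule Cons.IH[OF len la z' sub']) (use Cons.prems(5,6) js in auto)
    show ?thesis using lo hi IH js by auto
  qed
qed

lemma distinct_concat_map_cons:
  assumes "distinct L" "inj_on h (set L)" "\<And>p. p \<in> set L \<Longrightarrow> distinct (g p)"
  shows "distinct (concat (map (\<lambda>p. map ((#) (h p)) (g p)) L))"
  using assms
proof (induction L)
  case Nil then show ?case by simp
next
  case (Cons p L)
  have "distinct (map ((#) (h p)) (g p))" using Cons.prems by (simp add: distinct_map)
  moreover have "distinct (concat (map (\<lambda>p. map ((#) (h p)) (g p)) L))"
    using Cons.prems by (intro Cons.IH) (auto simp: inj_on_def)
  moreover have "set (map ((#) (h p)) (g p)) \<inter> set (concat (map (\<lambda>p. map ((#) (h p)) (g p)) L)) = {}"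
    using Cons.prems by (auto simp: inj_on_def)
  ultimately show ?case by simp
qed

lemma distinct_concat_map_cons_id:
  assumes "distinct L" "\<And>p. p \<in> set L \<Longrightarrow> distinct (g p)"
  shows "distinct (concat (map (\<lambda>p. map ((#) p) (g p)) L))"
  using distinct_concat_map_cons[of L "\<lambda>j. j" g] assms by simp

lemma distinct_gen2: "distinct (gen2 ns N X S)"
proof (induction ns arbitrary: N X S)
  case Nil then show ?case by simp
next
  case (Cons a ns)
  have d1: "distinct (concat (map (\<lambda>p. map ((#) (int p)) (gen2 ns (N - int p) (remove1 p X) (S - int p))) (remdups X)))"
    by (rule distinct_concat_map_cons) (auto simp: inj_on_def Cons.IH)
  have d2: "distinct (concat (map (\<lambda>j. map ((#) j) (gen2 ns (N - j) X S)) [N - S .. min (-1) (- int a)]))"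
    by (rule distinct_concat_map_cons_id) (auto simp: Cons.IH)
  have disj: "set (concat (map (\<lambda>p. map ((#) (int p)) (gen2 ns (N - int p) (remove1 p X) (S - int p))) (remdups X)))
     \<inter> set (concat (map (\<lambda>j. map ((#) j) (gen2 ns (N - j) X S)) [N - S .. min (-1) (- int a)])) = {}"
    by auto
  show ?case using d1 d2 disj by simp
qed



section \<open>Vertex operator modes on representations\<close>

definition vexec1 :: "nat list \<Rightarrow> int \<Rightarrow> nat list \<Rightarrow> rep" where
  "vexec1 ns n x = normalize (concat (map (\<lambda>js. mapc (mcoef ns js) (napply js [(x, 1)]))
       (gen2 ns (n + 1 - int (sum_list ns)) x (int (sum_list x)))))"

definition vexec :: "nat list \<Rightarrow> int \<Rightarrow> rep \<Rightarrow> rep" where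
  "vexec ns n V = concat (map (\<lambda>(x, c). mapc c (vexec1 ns n x)) V)"

lemma sum_map2_eq:
  "length ns = length js \<Longrightarrow> sum_list (map2 (\<lambda>a j. j + int a) ns js) = sum_list js + int (sum_list ns)"
  by (induction ns js rule: list_induct2) auto

lemma add_mset_subset_of_diff:
  assumes "a \<in># X - P" "P \<subseteq># X"
  shows "add_mset a P \<subseteq># X"
proof -
  have "count P a < count X a" using assms(1) by (simp only: in_diff_count)
  then show ?thesis using assms(2) by (auto simp: subseteq_mset_def)
qed

lemma foldr_pos_mono:
  "(\<forall>p\<in>set ps. 0 \<le> p) \<Longrightarrow> foldr hmode ps (mono X) = 0 \<or>
     (0 \<notin> set ps \<and> mset (map nat ps) \<subseteq># X \<and> (\<exists>c. foldr hmode ps (mono X) = smul c (mono (X - mset (map nat ps)))))"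
proof (induction ps)
  case Nil then show ?case by (auto intro: exI[of _ 1])
next
  case (Cons p ps)
  have p0: "0 \<le> p" and ps0: "\<forall>p\<in>set ps. 0 \<le> p" using Cons.prems by auto
  have eq: "foldr hmode (p # ps) (mono X) = hmode p (foldr hmode ps (mono X))" by simp
  from Cons.IH[OF ps0] show ?case
  proof
    assume "foldr hmode ps (mono X) = 0"
    then show ?case using eq by simp
  next
    assume "0 \<notin> set ps \<and> mset (map nat ps) \<subseteq># X \<and> (\<exists>c. foldr hmode ps (mono X) = smul c (mono (X - mset (map nat ps))))"
    then obtain c where nz: "0 \<notin> set ps" and sub: "mset (map nat ps) \<subseteq># X"
      and w: "foldr hmode ps (mono X) = smul c (mono (X - mset (map nat ps)))" by blast
    define Y where "Y = X - mset (map nat ps)"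
    have eq2: "foldr hmode (p # ps) (mono X) = smul c (hmode_basis p Y)"
      using eq w by (simp add: Y_def hmode_smul_mono)
    show ?case
    proof (cases "p = 0")
      case True then show ?thesis using eq2 by (simp add: hmode_basis_def)
    next
      case False
      then have pp: "0 < p" using p0 by simp
      have hb: "hmode_basis p Y = smul (of_int p * of_nat (count Y (nat p))) (mono (Y - {#nat p#}))"
        using pp by (simp add: hmode_basis_def)
      show ?thesis
      proof (cases "count Y (nat p) = 0")
        case True then show ?thesis using eq2 hb by simp
      next
        case False
        then have inY: "nat p \<in># X - mset (map nat ps)" by (metis Y_def count_eq_zero_iff)
        have sub2: "mset (map nat (p # ps)) \<subseteq># X"
          using add_mset_subset_of_diff[OF inY sub] by simp
        have "Y - {#nat p#} = X - mset (map nat (p # ps))" by (simp add: Y_def)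
        then have "foldr hmode (p # ps) (mono X) = smul (c * (of_int p * of_nat (count Y (nat p)))) (mono (X - mset (map nat (p # ps))))"
          using eq2 hb by (simp add: smul_smul)
        then show ?thesis using sub2 nz pp by auto
      qed
    qed
  qed
qed

lemma normal_apply_mono_nz:
  assumes "normal_apply js (mono X) \<noteq> 0"
  shows "0 \<notin> set js \<and> mset (map nat (filter (\<lambda>j. 0 < j) js)) \<subseteq># X"
proof -
  define nn where "nn = filter (\<lambda>j. 0 \<le> j) js"
  have na: "normal_apply js (mono X) = foldr hmode (filter (\<lambda>j. j < 0) js) (foldr hmode nn (mono X))"
    by (simp add: normal_apply_def apply_modes_def nn_def)
  have "foldr hmode nn (mono X) \<noteq> 0"
  proof
    assume "foldr hmode nn (mono X) = 0"
    then show False using assms na by (simp add: foldr_hmode_zero)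
  qed
  moreover have "\<forall>p\<in>set nn. 0 \<le> p" by (simp add: nn_def)
  ultimately have h: "0 \<notin> set nn" "mset (map nat nn) \<subseteq># X" using foldr_pos_mono[of nn X] by auto
  have z: "0 \<notin> set js" using h(1) by (auto simp: nn_def)
  have "filter (\<lambda>j. 0 < j) js = nn" unfolding nn_def
  proof (rule filter_cong[OF refl])
    fix x assume "x \<in> set js"
    then have "x \<noteq> 0" using z by blast
    then show "(0 < x) = (0 \<le> x)" by linarith
  qed
  then show ?thesis using z h by simp
qed

lemma vo_term_mono_nz:
  assumes "length js = length ns" "vo_term ns js (mono (mset x)) \<noteq> 0" "sum_list js = N"
  shows "js \<in> set (gen2 ns N x (int (sum_list x)))"
proof -
  have c: "mode_coeff ns js \<noteq> 0" and a: "normal_apply js (mono (mset x)) \<noteq> 0"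
    using assms(2) by (auto simp: vo_term_def smul_eq_0_iff)
  have "mcoef ns js \<noteq> 0" using c mode_coeff_eq[of ns js] assms(1) by auto
  then have la: "list_all2 (\<lambda>a j. j < 0 \<longrightarrow> j \<le> - int a) ns js" using mcoef_nz assms(1) by simp
  show ?thesis
    using gen2_complete[OF assms(1) la _ _ assms(3) refl] normal_apply_mono_nz[OF a] by simp
qed

lemma vo_term_vec_of:
  "vo_term ns js (vec_of V) = sum_list (map (\<lambda>e. smul (of_int (snd e)) (vo_term ns js (mono (mset (fst e))))) V)"
proof -
  have "vo_term ns js (vec_of V) = smul (mode_coeff ns js) (vec_of (napply js V))"
    by (simp add: vo_term_def normal_apply_vec_of)
  also have "\<dots> = smul (mode_coeff ns js) (sum_list (map (\<lambda>e. smul (of_int (snd e)) (vec_of (napply js [(fst e, 1)]))) V))"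
    by (subst vec_of_napply_sum) (simp add: case_prod_beta')
  also have "\<dots> = sum_list (map (\<lambda>e. smul (of_int (snd e)) (vo_term ns js (mono (mset (fst e))))) V)"
    by (simp add: smul_sum_list o_def smul_smul mult.commute vo_term_def normal_apply_vec_of[symmetric] vec_of_single)
  finally show ?thesis .
qed

lemma vo_sum_eq:
  assumes "sorted ns" "finite T" "T \<subseteq> {js. length js = length ns \<and> sum_list js = n + 1 - int (sum_list ns)}"
    "\<And>js. length js = length ns \<Longrightarrow> sum_list js = n + 1 - int (sum_list ns) \<Longrightarrow> vo_term ns js v \<noteq> 0 \<Longrightarrow> js \<in> T"
  shows "vo_mono_mode (mset ns) n v = (\<Sum>js\<in>T. vo_term ns js v)"
proof -
  have sl: "sorted_list_of_multiset (mset ns) = ns" using assms(1) by (simp add: sorted_sort_id)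
  let ?I = "{js. length js = length ns \<and> sum_list (map2 (\<lambda>a j. j + int a) ns js) = n + 1 \<and> vo_term ns js v \<noteq> 0}"
  have "vo_mono_mode (mset ns) n v = (\<Sum>js\<in>?I. vo_term ns js v)"
    by (simp add: vo_mono_mode_def Let_def sorted_sort_id[OF assms(1)])
  also have "\<dots> = (\<Sum>js\<in>T. vo_term ns js v)"
  proof (rule sum.mono_neutral_left[OF assms(2)])
    show "?I \<subseteq> T"
    proof
      fix js assume "js \<in> ?I"
      then show "js \<in> T" using assms(4) sum_map2_eq[of ns js] by auto
    qed
    show "\<forall>i\<in>T - ?I. vo_term ns i v = 0"
      using assms(3) sum_map2_eq by fastforce
  qed
  finally show ?thesis .
qed

lemma sum_list_nz_ex: "sum_list (map f V) \<noteq> (0::'a::monoid_add) \<Longrightarrow> \<exists>e\<in>set V. f e \<noteq> 0"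
  by (induction V) auto

lemma sum_swap_list: "(\<Sum>t\<in>T. sum_list (map (\<lambda>e. f e t) V)) = sum_list (map (\<lambda>e. \<Sum>t\<in>T. f e t) V)"
  for f :: "'e \<Rightarrow> 't \<Rightarrow> vec"
  by (induction V) (simp_all only: list.map sum_list.Cons sum_list.Nil sum.distrib sum.neutral_const)

lemma vo_mono_vec_of:
  assumes srt: "sorted ns"
  shows "vo_mono_mode (mset ns) n (vec_of V) = smul (1 / of_int (fct ns)) (vec_of (vexec ns n V))"
proof -
  define N where "N = n + 1 - int (sum_list ns)"
  define G where "G x = gen2 ns N x (int (sum_list x))" for x
  define T where "T = (\<Union>e\<in>set V. set (G (fst e)))"
  have finT: "finite T" by (simp add: T_def)
  have Tv: "T \<subseteq> {js. length js = length ns \<and> sum_list js = n + 1 - int (sum_list ns)}"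
    using gen2_sound by (fastforce simp: T_def G_def N_def)
  have nzG: "js \<in> set (G x)" if "length js = length ns" "sum_list js = N" "vo_term ns js (mono (mset x)) \<noteq> 0" for js x
    using vo_term_mono_nz[OF that(1,3,2)] by (simp add: G_def)
  have step1: "vo_mono_mode (mset ns) n (vec_of V) = (\<Sum>js\<in>T. vo_term ns js (vec_of V))"
  proof (rule vo_sum_eq[OF srt finT Tv])
    fix js assume l: "length js = length ns" and s: "sum_list js = n + 1 - int (sum_list ns)"
      and nz: "vo_term ns js (vec_of V) \<noteq> 0"
    then obtain e where e: "e \<in> set V" and "smul (of_int (snd e)) (vo_term ns js (mono (mset (fst e)))) \<noteq> 0"
      using sum_list_nz_ex[of "\<lambda>e. smul (of_int (snd e)) (vo_term ns js (mono (mset (fst e))))" V]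
      by (auto simp: vo_term_vec_of)
    then have "vo_term ns js (mono (mset (fst e))) \<noteq> 0" by (auto simp: smul_eq_0_iff)
    then have "js \<in> set (G (fst e))" using nzG l s by (simp add: N_def)
    then show "js \<in> T" using e by (auto simp: T_def)
  qed
  have step3: "(\<Sum>js\<in>T. vo_term ns js (mono (mset x))) = smul (1 / of_int (fct ns)) (vec_of (vexec1 ns n x))"
    if ex: "x \<in> fst ` set V" for x
  proof -
    have sub: "set (G x) \<subseteq> T" using ex by (auto simp: T_def)
    have "(\<Sum>js\<in>T. vo_term ns js (mono (mset x))) = (\<Sum>js\<in>set (G x). vo_term ns js (mono (mset x)))"
    proof (rule sum.mono_neutral_right[OF finT sub])
      show "\<forall>i\<in>T - set (G x). vo_term ns i (mono (mset x)) = 0"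
        using Tv nzG by (fastforce simp: N_def)
    qed
    also have "\<dots> = sum_list (map (\<lambda>js. vo_term ns js (mono (mset x))) (G x))"
      by (simp add: sum_list_distinct_conv_sum_set G_def distinct_gen2)
    also have "\<dots> = sum_list (map (\<lambda>js. smul (1 / of_int (fct ns)) (vec_of (mapc (mcoef ns js) (napply js [(x, 1)])))) (G x))"
    proof (rule arg_cong[where f = sum_list], rule map_cong[OF refl])
      fix js assume "js \<in> set (G x)"
      then have l: "length ns = length js" using gen2_sound by (simp add: G_def)
      show "vo_term ns js (mono (mset x)) = smul (1 / of_int (fct ns)) (vec_of (mapc (mcoef ns js) (napply js [(x, 1)])))"
        by (simp add: vo_term_def mode_coeff_eq[OF l] vec_of_single[symmetric] normal_apply_vec_of
              vec_of_mapc smul_smul)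
    qed
    also have "\<dots> = smul (1 / of_int (fct ns)) (vec_of (vexec1 ns n x))"
      by (simp add: vexec1_def vec_of_normalize vec_of_concat smul_sum_list o_def G_def N_def)
    finally show ?thesis .
  qed
  have "(\<Sum>js\<in>T. vo_term ns js (vec_of V))
      = sum_list (map (\<lambda>e. \<Sum>js\<in>T. smul (of_int (snd e)) (vo_term ns js (mono (mset (fst e))))) V)"
    by (simp add: vo_term_vec_of sum_swap_list)
  also have "\<dots> = sum_list (map (\<lambda>e. smul (of_int (snd e)) (smul (1 / of_int (fct ns)) (vec_of (vexec1 ns n (fst e))))) V)"
    by (rule arg_cong[where f = sum_list], rule map_cong[OF refl]) (simp add: smul_sum[symmetric] step3)
  also have "\<dots> = smul (1 / of_int (fct ns)) (vec_of (vexec ns n V))"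
    by (simp add: vexec_def vec_of_concat smul_sum_list o_def vec_of_mapc smul_smul mult.commute case_prod_beta')
  finally show ?thesis using step1 by simp
qed



section \<open>Zhu products on representations\<close>

fun brow :: "nat \<Rightarrow> int list" where
  "brow 0 = [1]"
| "brow (Suc w) = map2 (+) (0 # brow w) (brow w @ [0])"

lemma brow_eq: "brow w = map (\<lambda>i. int (w choose i)) [0..<Suc w]"
proof (induction w)
  case 0 then show ?case by simp
next
  case (Suc w)
  let ?B = "map (\<lambda>i. int (w choose i)) [0..<Suc w]"
  show ?case
  proof (rule nth_equalityI)
    show "length (brow (Suc w)) = length (map (\<lambda>i. int (Suc w choose i)) [0..<Suc (Suc w)])"
      by (simp add: Suc.IH)
  next
    fix i assume "i < length (brow (Suc w))"
    then have i: "i < Suc (Suc w)" by (simp add: Suc.IH)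
    have "brow (Suc w) ! i = (0 # ?B) ! i + (?B @ [0]) ! i"
      using i by (simp add: Suc.IH del: upt_Suc)
    also have "\<dots> = int (Suc w choose i)"
    proof (cases i)
      case 0 then show ?thesis by (simp add: nth_append del: upt_Suc)
    next
      case (Suc k)
      then have k: "k \<le> w" using i by simp
      have a: "(0 # ?B) ! i = int (w choose k)" using Suc k by (simp del: upt_Suc)
      have b: "(?B @ [0]) ! i = int (w choose Suc k)"
      proof (cases "Suc k < Suc w")
        case True then show ?thesis using Suc by (simp add: nth_append del: upt_Suc)
      next
        case False
        then have "Suc k = Suc w" using k by simp
        then show ?thesis using Suc by (simp add: nth_append del: upt_Suc)
      qed
      show ?thesis using a b Suc by simp
    qed
    finally show "brow (Suc w) ! i = map (\<lambda>i. int (Suc w choose i)) [0..<Suc (Suc w)] ! i"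
      using i by (simp del: upt_Suc)
  qed
qed

lemma map2_map_same: "map2 f xs (map g xs) = map (\<lambda>x. f x (g x)) xs"
  by (induction xs) auto

definition zexec :: "int \<Rightarrow> int \<Rightarrow> rep \<Rightarrow> rep \<Rightarrow> rep" where
  "zexec G d U V = normalize (concat (map (\<lambda>(ns, c). mapc (c * (G div fct (sort ns)))
      (concat (map2 (\<lambda>i b. mapc b (vexec (sort ns) (int i - d) V)) [0..<sum_list ns + 1] (brow (sum_list ns))))) U))"

definition zin :: "int \<Rightarrow> nat multiset \<Rightarrow> vec \<Rightarrow> vec" where
  "zin d m v = (\<Sum>i\<le>sum_mset m. smul (of_nat (sum_mset m choose i)) (vo_mono_mode m (int i - d) v))"

lemma zstar_zin: "zstar u v = (\<Sum>m\<in>supp u. smul (u m) (zin 1 m v))"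
  by (simp add: zstar_def zin_def)

lemma zcirc_zin: "zcirc u v = (\<Sum>m\<in>supp u. smul (u m) (zin 2 m v))"
  by (simp add: zcirc_def zin_def)

lemma zin_vec_of:
  "zin d (mset ns) (vec_of V) = smul (1 / of_int (fct (sort ns)))
     (vec_of (concat (map2 (\<lambda>i b. mapc b (vexec (sort ns) (int i - d) V)) [0..<sum_list ns + 1] (brow (sum_list ns)))))"
proof -
  let ?w = "sum_list ns"
  have m: "mset ns = mset (sort ns)" by simp
  have w: "sum_mset (mset ns) = ?w" by (simp add: sum_mset_sum_list)
  have set: "{..?w} = set [0..<Suc ?w]" by auto
  have "zin d (mset ns) (vec_of V) = (\<Sum>i\<in>set [0..<Suc ?w]. smul (of_nat (?w choose i)) (vo_mono_mode (mset (sort ns)) (int i - d) (vec_of V)))"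
    unfolding zin_def w set by (simp only: m[symmetric])
  also have "\<dots> = sum_list (map (\<lambda>i. smul (of_nat (?w choose i)) (vo_mono_mode (mset (sort ns)) (int i - d) (vec_of V))) [0..<Suc ?w])"
    by (rule sum_set_upt_conv_sum_list_nat)
  also have "\<dots> = sum_list (map (\<lambda>i. smul (of_nat (?w choose i)) (smul (1 / of_int (fct (sort ns))) (vec_of (vexec (sort ns) (int i - d) V)))) [0..<Suc ?w])"
    by (simp only: vo_mono_vec_of[OF sorted_sort])
  also have "\<dots> = smul (1 / of_int (fct (sort ns))) (sum_list (map (\<lambda>i. smul (of_int (int (?w choose i))) (vec_of (vexec (sort ns) (int i - d) V))) [0..<Suc ?w]))"
    by (simp add: smul_sum_list o_def smul_smul mult.commute del: upt_Suc)
  also have "\<dots> = smul (1 / of_int (fct (sort ns))) (vec_of (concat (map2 (\<lambda>i b. mapc b (vexec (sort ns) (int i - d) V)) [0..<sum_list ns + 1] (brow (sum_list ns)))))"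
    by (simp add: brow_eq map2_map_same vec_of_concat vec_of_mapc o_def del: upt_Suc)
  finally show ?thesis .
qed

lemma Z_vec_of:
  assumes G: "G \<noteq> 0" and dv: "\<forall>e\<in>set U. fct (sort (fst e)) dvd G"
  shows "(\<Sum>m\<in>supp (vec_of U). smul (vec_of U m) (zin d m (vec_of V))) = smul (1 / of_int G) (vec_of (zexec G d U V))"
proof -
  have "(\<Sum>m\<in>supp (vec_of U). smul (vec_of U m) (zin d m (vec_of V)))
      = sum_list (map (\<lambda>(ns, c). smul (of_int c) (zin d (mset ns) (vec_of V))) U)"
    by (rule lsum_vec_of)
  also have "\<dots> = sum_list (map (\<lambda>(ns, c). smul (1 / of_int G) (vec_of (mapc (c * (G div fct (sort ns)))
      (concat (map2 (\<lambda>i b. mapc b (vexec (sort ns) (int i - d) V)) [0..<sum_list ns + 1] (brow (sum_list ns))))))) U)"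
  proof (rule arg_cong[where f = sum_list], rule map_cong[OF refl])
    fix e assume e: "e \<in> set U"
    obtain ns c where ec: "e = (ns, c)" by (cases e)
    have f0: "fct (sort ns) \<noteq> 0" by (rule fct_nonzero)
    have d: "fct (sort ns) dvd G" using dv e ec by auto
    have q: "of_int (G div fct (sort ns)) = (of_int G / of_int (fct (sort ns)) :: complex)"
      using d f0 by (simp add: of_int_div)
    have "(of_int c :: complex) * (1 / of_int (fct (sort ns))) = 1 / of_int G * of_int (c * (G div fct (sort ns)))"
      using G f0 by (simp add: q field_simps)
    then show "(case e of (ns, c) \<Rightarrow> smul (of_int c) (zin d (mset ns) (vec_of V))) =
          (case e of (ns, c) \<Rightarrow> smul (1 / of_int G) (vec_of (mapc (c * (G div fct (sort ns)))
      (concat (map2 (\<lambda>i b. mapc b (vexec (sort ns) (int i - d) V)) [0..<sum_list ns + 1] (brow (sum_list ns)))))))"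
      by (simp add: ec zin_vec_of vec_of_mapc smul_smul)
  qed
  also have "\<dots> = smul (1 / of_int G) (vec_of (zexec G d U V))"
    by (simp add: zexec_def vec_of_normalize vec_of_concat smul_sum_list o_def case_prod_beta')
  finally show ?thesis .
qed

lemma zstar_vec_of:
  "G \<noteq> 0 \<Longrightarrow> \<forall>e\<in>set U. fct (sort (fst e)) dvd G \<Longrightarrow>
    zstar (vec_of U) (vec_of V) = smul (1 / of_int G) (vec_of (zexec G 1 U V))"
  unfolding zstar_zin by (rule Z_vec_of)

lemma zcirc_vec_of:
  "G \<noteq> 0 \<Longrightarrow> \<forall>e\<in>set U. fct (sort (fst e)) dvd G \<Longrightarrow>
    zcirc (vec_of U) (vec_of V) = smul (1 / of_int G) (vec_of (zexec G 2 U V))"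
  unfolding zcirc_zin by (rule Z_vec_of)

lemma vo_term_smul: "vo_term ns js (smul s v) = smul s (vo_term ns js v)"
  by (simp add: vo_term_def normal_apply_smul smul_smul mult.commute)

lemma vo_term_zero: "vo_term ns js 0 = 0"
proof -
  have "normal_apply js 0 = 0" by (simp add: normal_apply_def apply_modes_def foldr_hmode_zero)
  then show ?thesis by (simp add: vo_term_def)
qed

lemma vo_mono_mode_smul: "vo_mono_mode m n (smul s v) = smul s (vo_mono_mode m n v)"
proof (cases "s = 0")
  case True
  then show ?thesis by (simp add: vo_mono_mode_def vo_term_zero Let_def)
next
  case False
  then show ?thesis
    by (simp add: vo_mono_mode_def Let_def vo_term_smul smul_eq_0_iff smul_sum)
qed

lemma zin_smul: "zin d m (smul s v) = smul s (zin d m v)"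
  by (simp add: zin_def vo_mono_mode_smul smul_sum smul_smul mult.commute)

lemma Z_smul:
  "(\<Sum>m\<in>supp (smul a u). smul ((smul a u) m) (zin d m (smul b v))) = smul (a * b) (\<Sum>m\<in>supp u. smul (u m) (zin d m v))"
  by (subst lsum_smul) (simp add: zin_smul smul_sum smul_smul mult_ac)

definition vq :: "int \<Rightarrow> rep \<Rightarrow> vec" where "vq D X = smul (1 / of_int D) (vec_of X)"

lemma zstar_vq:
  assumes "G \<noteq> 0" "\<forall>e\<in>set U. fct (sort (fst e)) dvd G"
  shows "zstar (vq a U) (vq b V) = vq (a * b * G) (zexec G 1 U V)"
proof -
  have "zstar (vq a U) (vq b V) = smul (1 / of_int a * (1 / of_int b)) (zstar (vec_of U) (vec_of V))"
    unfolding vq_def zstar_zin by (rule Z_smul)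
  also have "\<dots> = vq (a * b * G) (zexec G 1 U V)"
    by (simp add: zstar_vec_of[OF assms] vq_def smul_smul)
  finally show ?thesis .
qed

lemma vq_eqI:
  assumes "D \<noteq> 0" "D' \<noteq> 0" "normalize (mapc D' X @ mapc (- D) Y) = []"
  shows "vq D X = vq D' Y"
proof -
  have "vec_of (mapc D' X @ mapc (- D) Y) = 0" using vec_of_normalize[of "mapc D' X @ mapc (- D) Y"] assms(3) by simp
  then have h: "of_int D' * vec_of X m = of_int D * vec_of Y m" for m
    by (simp add: vec_of_append vec_of_mapc fun_eq_iff smul_def)
  show ?thesis unfolding vq_def smul_def
  proof
    fix m
    show "1 / of_int D * vec_of X m = 1 / of_int D' * vec_of Y m"
      using h[of m] assms(1,2) by (simp add: field_simps)
  qed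
qed

lemma OV_zero': "(\<lambda>a. 0) \<in> OV"
  using OV.zero by (simp add: zero_fun_def)

lemma OV_smul: "x \<in> OV \<Longrightarrow> smul c x \<in> OV"
proof (induction rule: OV.induct)
  case zero then show ?case by (simp add: smul_def OV_zero')
next
  case (step x u v c')
  have "smul c (x + smul c' (zcirc u v)) = smul c x + smul (c * c') (zcirc u v)"
    by (simp add: smul_add smul_smul)
  moreover have "smul c x + smul (c * c') (zcirc u v) \<in> OV"
    by (rule OV.step[OF step.IH step.hyps(2-4)])
  ultimately have "smul c (x + smul c' (zcirc u v)) \<in> OV" by simp
  then show ?case unfolding plus_fun_def .
qed

lemma mono_M1plus:
  assumes "0 \<notin> set u" "even (length u)"
  shows "mono (mset u) \<in> M1plus"
proof -
  have "mono (mset u) \<in> M1" using assms(1) by (simp add: M1_def)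
  moreover have "theta (mono (mset u)) = mono (mset u)"
    using assms(2) by (auto simp: theta_def mono_def fun_eq_iff)
  ultimately show ?thesis by (simp add: M1plus_def)
qed

lemma mono_homogeneous: "homogeneous (mono m)"
  by (auto simp: homogeneous_def)

definition ecomb :: "(nat list \<times> nat list \<times> int) list \<Rightarrow> rep" where
  "ecomb L = concat (map (\<lambda>(u, v, k). mapc k (zexec (fct (sort u)) 2 [(u, 1)] [(v, 1)])) L)"

lemma ecomb_OV:
  "\<forall>(u, v, k)\<in>set L. 0 \<notin> set u \<and> even (length u) \<and> 0 \<notin> set v \<and> even (length v) \<Longrightarrow> vec_of (ecomb L) \<in> OV"
proof (induction L)
  case Nil then show ?case by (simp add: ecomb_def OV_zero' OV.zero)
next
  case (Cons t L)
  obtain u v k where t: "t = (u, v, k)" by (cases t)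
  have c: "0 \<notin> set u" "even (length u)" "0 \<notin> set v" "even (length v)" using Cons.prems t by auto
  have IH: "vec_of (ecomb L) \<in> OV" using Cons by simp
  define G where "G = fct (sort u)"
  have G0: "G \<noteq> 0" by (simp add: G_def fct_nonzero)
  have "zcirc (vec_of [(u, 1)]) (vec_of [(v, 1)]) = smul (1 / of_int G) (vec_of (zexec G 2 [(u, 1)] [(v, 1)]))"
    by (rule zcirc_vec_of[OF G0]) (simp add: G_def)
  then have z: "vec_of (zexec G 2 [(u, 1)] [(v, 1)]) = smul (of_int G) (zcirc (mono (mset u)) (mono (mset v)))"
    using G0 by (simp add: vec_of_single smul_smul)
  have eq: "vec_of (ecomb (t # L)) = vec_of (ecomb L) + smul (of_int k * of_int G) (zcirc (mono (mset u)) (mono (mset v)))"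
    by (simp add: ecomb_def t vec_of_append vec_of_mapc z[unfolded G_def] smul_smul add.commute G_def)
  have "vec_of (ecomb L) + smul (of_int k * of_int G) (zcirc (mono (mset u)) (mono (mset v))) \<in> OV"
    by (rule OV.step[OF IH mono_M1plus[OF c(1,2)] mono_homogeneous mono_M1plus[OF c(3,4)]])
  then show ?case unfolding eq .
qed



section \<open>The concrete computation\<close>

definition OMr :: rep where "OMr = [([1, 1], 1)]"
definition J2r :: rep where "J2r = [([1, 1, 1, 1], 2), ([1, 3], -4), ([2, 2], 3)]"
definition VAr :: rep where "VAr = [([], 1)]"
definition W2r :: rep where "W2r = [([1, 1], 4), ([1, 2], 8), ([1, 3], 4), ([1, 1, 1, 1], 1)]"
definition W3r :: rep where "W3r = [([1, 1], 20), ([1, 2], 176), ([1, 3], 352), ([1, 4], 304), ([1, 5], 96), ([2, 2], 72), ([2, 3], 96), ([2, 4], 24), ([3, 3], 12), ([1, 1, 1, 1], 52), ([1, 1, 1, 2], 104), ([1, 1, 1, 3], 28), ([1, 1, 2, 2], 24), ([1, 1, 1, 1, 1, 1], 1)]"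
definition W4r :: rep where "W4r = [([1, 1], 88), ([1, 2], 2256), ([1, 3], 11112), ([1, 4], 25888), ([1, 5], 31200), ([1, 6], 18864), ([1, 7], 4536), ([2, 2], 2904), ([2, 3], 10752), ([2, 4], 10968), ([2, 5], 5808), ([2, 6], 1248), ([3, 3], 4944), ([3, 4], 4944), ([3, 5], 1032), ([4, 4], 480), ([1, 1, 1, 1], 1326), ([1, 1, 1, 2], 7568), ([1, 1, 1, 3], 7720), ([1, 1, 1, 4], 4240), ([1, 1, 1, 5], 960), ([1, 1, 2, 2], 7260), ([1, 1, 2, 3], 6960), ([1, 1, 2, 4], 1440), ([1, 1, 3, 3], 648), ([1, 2, 2, 2], 1360), ([1, 2, 2, 3], 744), ([2, 2, 2, 2], 30), ([1, 1, 1, 1, 1, 1], 232), ([1, 1, 1, 1, 1, 2], 464), ([1, 1, 1, 1, 1, 3], 88), ([1, 1, 1, 1, 2, 2], 144), ([1, 1, 1, 1, 1, 1, 1, 1], 1)]"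
definition Qr :: rep where "Qr = [([], -54), ([1, 1], -811), ([1, 2], -2512), ([1, 3], -1256), ([1, 1, 1, 1], -314)]"
definition Ar :: rep where "Ar = [([1, 1], -7), ([1, 2], -16), ([1, 3], -12), ([2, 2], 3)]"
definition Br :: rep where "Br = [([], 108), ([1, 1], 2602), ([1, 2], 7264), ([1, 3], 3072), ([2, 2], 420), ([1, 1, 1, 1], 1188)]"
definition Et :: "(nat list \<times> nat list \<times> int) list" where "Et = [([1, 1], [], -3159720), ([2, 2], [], -5226498), ([1, 2], [], -13062888), ([1, 3], [], -5040684), ([1, 1], [1, 2], -2584338), ([1, 1], [1, 1], -51406020), ([1, 2], [1, 1], -20721628), ([1, 4], [], -489120), ([1, 1], [1, 3], 46930104), ([1, 3], [1, 1], -1461470), ([2, 2], [1, 1], -859721), ([2, 2], [1, 1, 1, 1], -958554), ([1, 2], [1, 1, 1, 1], 40005336), ([2, 2], [1, 3], 7956522), ([1, 2], [1, 3], 224003064), ([1, 3], [1, 2], 23654142), ([1, 1], [2, 2], -30101514), ([1, 2], [1, 2], 197482884), ([1, 1], [1, 1, 1, 2], -60378324), ([1, 1], [2, 3], -48757920), ([2, 2], [1, 2], 31019283), ([1, 1], [3, 3], 14854968), ([1, 3], [1, 3], 4724676), ([1, 1], [1, 1, 1, 3], -42176376), ([1, 2], [1, 4], 112355100), ([1, 1], [1, 4], -16616538), ([1, 1], [1, 5], -44093484), ([1, 1], [1, 1, 2, 2], -22046742), ([1, 2], [1, 1, 1, 2], 44093484), ([1, 3], [2, 2], 7348914), ([1,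 1], [2, 4], -34130808), ([1, 2], [2, 3], -35492688), ([2, 2], [2, 2], 5198715), ([1, 2], [2, 2], -7525260), ([2, 3], [], -1370160), ([1, 1], [1, 1, 1, 1], -7222920), ([1, 1, 1, 1], [1, 2], -3461940), ([1, 4], [1, 1], -109980)]"
definition Et2 :: "(nat list \<times> nat list \<times> int) list" where "Et2 = [([1, 1], [], -944280), ([2, 2], [], -522222), ([1, 2], [], -6543192), ([1, 3], [], -3395076), ([1, 1], [1, 2], -153228382), ([1, 1], [1, 1], -344140), ([1, 2], [1, 1], -39657252), ([1, 4], [], -291600), ([1, 1], [1, 3], -186717144), ([1, 3], [1, 1], -21912930), ([2, 2], [1, 1], -17797959), ([2, 2], [1, 1, 1, 1], 2671434), ([1, 2], [1, 1, 1, 1], -117685656), ([2, 2], [1, 3], -22174362), ([1, 2], [1, 3], -609477624), ([1, 3], [1, 2], -59654142), ([1, 1], [2, 2], 121075914), ([1, 2], [1, 2], -406299684), ([1, 1], [1, 1, 1, 2], 176768244), ([1, 1], [2, 3], 163785600), ([2, 2], [1, 2], -60868323), ([1, 1], [3, 3], -41399928), ([1, 3], [1, 3], -13167396), ([1, 1], [1, 1, 1, 3], 117543096), ([1, 2], [1, 4], -313127100), ([1, 1], [1, 4], 91288458), ([1, 1], [1, 5], 122885964), ([1, 1], [1, 1, 2, 2], 61442982), ([1, 2], [1, 1, 1, 2], -122885964), ([1, 3], [2, 2], -20480994), ([1, 1], [2, 4], 95120568), ([1, 2], [2, 3], 98916048), ([2, 2], [2, 2], -14488515), ([1, 2], [2,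 2], 58672620), ([2, 3], [], -276480), ([1, 1], [1, 1, 1, 1], -83160), ([1, 1, 1, 1], [1, 2], -173340), ([1, 4], [1, 1], -472500)]"

lemma omega_vq: "omega = vq 2 OMr"
  by (simp add: fun_eq_iff omega_def vq_def OMr_def vec_of_Cons smul_def mono_def)

lemma vac_vq: "vac = vq 1 VAr"
  by (simp add: fun_eq_iff vac_def vq_def VAr_def vec_of_Cons smul_def mono_def)

lemma Jvec_vq: "Jvec = vq 2 J2r"
proof -
  have e: "{#3, 1#} = mset [1, 3::nat]" by (simp add: add_mset_commute)
  show ?thesis
    by (simp add: fun_eq_iff Jvec_def vq_def J2r_def vec_of_Cons smul_def mono_def e)
qed

lemma w2_vq: "zstar omega omega = vq 4 W2r"
proof -
  have "zstar omega omega = vq (2 * 2 * 1) (zexec 1 1 OMr OMr)"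
    unfolding omega_vq by (rule zstar_vq) (simp, code_simp)
  also have "\<dots> = vq 4 W2r"
    by (rule vq_eqI) (simp, simp, code_simp)
  finally show ?thesis .
qed

lemma w3_vq: "zstar (zstar omega omega) omega = vq 8 W3r"
proof -
  have "zstar (zstar omega omega) omega = vq (4 * 2 * 2) (zexec 2 1 W2r OMr)"
    unfolding w2_vq unfolding omega_vq by (rule zstar_vq) (simp, code_simp)
  also have "\<dots> = vq 8 W3r"
    by (rule vq_eqI) (simp, simp, code_simp)
  finally show ?thesis .
qed

lemma w4_vq: "zstar (zstar (zstar omega omega) omega) omega = vq 16 W4r"
proof -
  have "zstar (zstar (zstar omega omega) omega) omega = vq (8 * 2 * 24) (zexec 24 1 W3r OMr)"
    unfolding w3_vq unfolding omega_vq by (rule zstar_vq) (simp, code_simp)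
  also have "\<dots> = vq 16 W4r"
    by (rule vq_eqI) (simp, simp, code_simp)
  finally show ?thesis .
qed

lemma JJ_vq: "zstar Jvec Jvec = vq (2 * 2 * 2) (zexec 2 1 J2r J2r)"
  unfolding Jvec_vq by (rule zstar_vq) (simp, code_simp)

lemma q_vq: "smul (-314/35) (vq 4 W2r) + smul (89/14) (vq 2 OMr) - smul (27/70) (vq 1 VAr) = vq 140 Qr"
proof -
  have "vec_of (mapc (-314) W2r @ mapc 445 OMr @ mapc (-54) VAr) = vec_of Qr"
    by (rule vec_of_eq_from_normalize) code_simp
  note e = this
  have h: "vec_of Qr m = - 314 * vec_of W2r m + 445 * vec_of OMr m - 54 * vec_of VAr m" for m
    using fun_cong[OF e, of m] by (simp add: vec_of_append vec_of_mapc smul_def algebra_simps)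
  show ?thesis
    by (simp add: fun_eq_iff vq_def smul_def h field_simps)
qed

lemma QJ_vq: "zstar (vq 140 Qr) (vq 2 J2r) = vq (140 * 2 * 2) (zexec 2 1 Qr J2r)"
  by (rule zstar_vq) (simp, code_simp)

lemma t_vq:
  "vq (2 * 2 * 2) (zexec 2 1 J2r J2r)
     - (smul (1816/35) (vq 16 W4r) - smul (212/5) (vq 8 W3r) + smul (89/10) (vq 4 W2r) - smul (27/70) (vq 2 OMr))
     - vq (140 * 2 * 2) (zexec 2 1 Qr J2r) = vq 33600 (ecomb Et)"
proof -
  have "vec_of (mapc 4200 (zexec 2 1 J2r J2r) @ mapc (-108960) W4r @ mapc 178080 W3r @ mapc (-74760) W2r
      @ mapc 6480 OMr @ mapc (-60) (zexec 2 1 Qr J2r)) = vec_of (ecomb Et)"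
    by (rule vec_of_eq_from_normalize) code_simp
  note e = this
  have h: "vec_of (ecomb Et) m = 4200 * vec_of (zexec 2 1 J2r J2r) m - 108960 * vec_of W4r m
      + 178080 * vec_of W3r m - 74760 * vec_of W2r m + 6480 * vec_of OMr m - 60 * vec_of (zexec 2 1 Qr J2r) m" for m
    using fun_cong[OF e, of m] by (simp add: vec_of_append vec_of_mapc smul_def algebra_simps)
  show ?thesis
    by (simp add: fun_eq_iff vq_def smul_def h field_simps)
qed

lemma a_vq: "Jvec + omega - smul 4 (vq 4 W2r) = vq 2 Ar"
proof -
  have "vec_of (J2r @ OMr @ mapc (-2) W2r) = vec_of Ar"
    by (rule vec_of_eq_from_normalize) code_simp
  note e = this
  have h: "vec_of Ar m = vec_of J2r m + vec_of OMr m - 2 * vec_of W2r m" for m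
    using fun_cong[OF e, of m] by (simp add: vec_of_append vec_of_mapc smul_def algebra_simps)
  show ?thesis
    by (simp add: Jvec_vq omega_vq fun_eq_iff vq_def smul_def h field_simps)
qed

lemma b_vq: "smul 70 Jvec + smul 908 (vq 4 W2r) - smul 515 omega + smul 27 vac = vq 4 Br"
proof -
  have "vec_of (mapc 140 J2r @ mapc 908 W2r @ mapc (-1030) OMr @ mapc 108 VAr) = vec_of Br"
    by (rule vec_of_eq_from_normalize) code_simp
  note e = this
  have h: "vec_of Br m = 140 * vec_of J2r m + 908 * vec_of W2r m - 1030 * vec_of OMr m + 108 * vec_of VAr m" for m
    using fun_cong[OF e, of m] by (simp add: vec_of_append vec_of_mapc smul_def algebra_simps)
  show ?thesis
    by (simp add: Jvec_vq omega_vq vac_vq fun_eq_iff vq_def smul_def h field_simps)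
qed

lemma vq_OV: "vec_of X \<in> OV \<Longrightarrow> vq D X \<in> OV"
  unfolding vq_def by (rule OV_smul)

lemma Et_OV: "vq 33600 (ecomb Et) \<in> OV"
  by (rule vq_OV, rule ecomb_OV) (simp add: Et_def)

lemma Et2_OV: "vq 160 (ecomb Et2) \<in> OV"
  by (rule vq_OV, rule ecomb_OV) (simp add: Et2_def)

lemma t2_vq: "zstar (vq 2 Ar) (vq 4 Br) = vq 160 (ecomb Et2)"
proof -
  have "zstar (vq 2 Ar) (vq 4 Br) = vq (2 * 4 * 2) (zexec 2 1 Ar Br)"
    by (rule zstar_vq) (simp, code_simp)
  also have "\<dots> = vq 160 (ecomb Et2)"
    by (rule vq_eqI) (simp, simp, code_simp)
  finally show ?thesis .
qed

theorem proposition4p1: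
  defines "w2 \<equiv> zstar omega omega"
      and "w3 \<equiv> zstar (zstar omega omega) omega"
      and "w4 \<equiv> zstar (zstar (zstar omega omega) omega) omega"
  shows "zstar Jvec Jvec
           - (smul (1816/35) w4 - smul (212/5) w3 + smul (89/10) w2 - smul (27/70) omega)
           - zstar (smul (-314/35) w2 + smul (89/14) omega - smul (27/70) vac) Jvec
         \<in> OV \<and>
         zstar (Jvec + omega - smul 4 w2)
               (smul 70 Jvec + smul 908 w2 - smul 515 omega + smul 27 vac) \<in> OV"
proof
  have W2: "w2 = vq 4 W2r" unfolding w2_def by (rule w2_vq)
  have W3: "w3 = vq 8 W3r" unfolding w3_def by (rule w3_vq)
  have W4: "w4 = vq 16 W4r" unfolding w4_def by (rule w4_vq)
  have Q: "smul (-314/35) w2 + smul (89/14) omega - smul (27/70) vac = vq 140 Qr"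
    unfolding W2 omega_vq vac_vq by (rule q_vq)
  have "zstar Jvec Jvec
           - (smul (1816/35) w4 - smul (212/5) w3 + smul (89/10) w2 - smul (27/70) omega)
           - zstar (smul (-314/35) w2 + smul (89/14) omega - smul (27/70) vac) Jvec = vq 33600 (ecomb Et)"
    unfolding Q unfolding JJ_vq unfolding W2 W3 W4 omega_vq
    unfolding Jvec_vq unfolding QJ_vq by (rule t_vq)
  then show "zstar Jvec Jvec
           - (smul (1816/35) w4 - smul (212/5) w3 + smul (89/10) w2 - smul (27/70) omega)
           - zstar (smul (-314/35) w2 + smul (89/14) omega - smul (27/70) vac) Jvec \<in> OV"
    using Et_OV by simp
next
  have W2: "w2 = vq 4 W2r" unfolding w2_def by (rule w2_vq)
  have "zstar (Jvec + omega - smul 4 w2) (smul 70 Jvec + smul 908 w2 - smul 515 omega + smul 27 vac)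
      = vq 160 (ecomb Et2)"
    unfolding W2 unfolding a_vq b_vq by (rule t2_vq)
  then show "zstar (Jvec + omega - smul 4 w2) (smul 70 Jvec + smul 908 w2 - smul 515 omega + smul 27 vac) \<in> OV"
    using Et2_OV by simp
qed

end
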